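(* Let $\mathbf{A}$ be an algebra and $B$ a subuniverse of $\mathbf{A}$. If $B$ absorbs $\mathbf{A}$, then $B$ Jónsson absorbs $\mathbf{A}$.
   Context: Absorption: a subuniverse $B$ of $\mathbf{A}$ absorbs $\mathbf{A}$ if there is an idempotent term $t$ of $\mathbf{A}$, say $n$-ary, such that $t(a_1,\dots,a_n)\in B$ whenever all but at most one of the $a_i$ lie in $B$ and the remaining one lies in $A$. Jónsson absorption: a subuniverse $B$ of $\mathbf{A}$ Jónsson absorbs $\mathbf{A}$ if there are ternary terms $d_0,\dots,d_n$ of $\mathbf{A}$ such that $d_i(b,a,b')\in B$ for all $i$, all $b,b'\in B$, $a\in A$; $d_i(x,y,y)=d_{i+1}(x,x,y)$ for all $i<n$ and all $x,y\in A$; $d_0(x,y,z)=x$ and $d_n(x,y,z)=z$ for all $x,y,z\in A$. *)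

theory Defs
  imports Main
begin

datatype 'f trm = Var nat | Op 'f "'f trm list"

fun wf_trm :: "('f \<Rightarrow> nat) \<Rightarrow> nat \<Rightarrow> 'f trm \<Rightarrow> bool" where
  "wf_trm ar n (Var i) = (i < n)"
| "wf_trm ar n (Op f ts) = (length ts = ar f \<and> (\<forall>t\<in>set ts. wf_trm ar n t))"

fun eval :: "('f \<Rightarrow> 'a list \<Rightarrow> 'a) \<Rightarrow> 'a list \<Rightarrow> 'f trm \<Rightarrow> 'a" where
  "eval op xs (Var i) = xs ! i"
| "eval op xs (Op f ts) = op f (map (eval op xs) ts)"

definition algebra :: "'a set \<Rightarrow> ('f \<Rightarrow> nat) \<Rightarrow> ('f \<Rightarrow> 'a list \<Rightarrow> 'a) \<Rightarrow> bool" where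
  "algebra A ar op \<longleftrightarrow> A \<noteq> {} \<and>
     (\<forall>f xs. length xs = ar f \<and> set xs \<subseteq> A \<longrightarrow> op f xs \<in> A)"

definition subuniverse :: "'a set \<Rightarrow> 'a set \<Rightarrow> ('f \<Rightarrow> nat) \<Rightarrow> ('f \<Rightarrow> 'a list \<Rightarrow> 'a) \<Rightarrow> bool" where
  "subuniverse B A ar op \<longleftrightarrow> B \<subseteq> A \<and>
     (\<forall>f xs. length xs = ar f \<and> set xs \<subseteq> B \<longrightarrow> op f xs \<in> B)"

definition idempotent_term :: "'a set \<Rightarrow> ('f \<Rightarrow> 'a list \<Rightarrow> 'a) \<Rightarrow> nat \<Rightarrow> 'f trm \<Rightarrow> bool" where
  "idempotent_term A op n t \<longleftrightarrow> (\<forall>x\<in>A. eval op (replicate n x) t = x)"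

definition absorbs :: "'a set \<Rightarrow> 'a set \<Rightarrow> ('f \<Rightarrow> nat) \<Rightarrow> ('f \<Rightarrow> 'a list \<Rightarrow> 'a) \<Rightarrow> bool" where
  "absorbs B A ar op \<longleftrightarrow> (\<exists>n t. wf_trm ar n t \<and> idempotent_term A op n t \<and>
     (\<forall>as. length as = n \<and> set as \<subseteq> A \<and> card {i. i < n \<and> as ! i \<notin> B} \<le> 1
            \<longrightarrow> eval op as t \<in> B))"

definition jonsson_absorbs :: "'a set \<Rightarrow> 'a set \<Rightarrow> ('f \<Rightarrow> nat) \<Rightarrow> ('f \<Rightarrow> 'a list \<Rightarrow> 'a) \<Rightarrow> bool" where
  "jonsson_absorbs B A ar op \<longleftrightarrow> (\<exists>(n::nat) (d::nat \<Rightarrow> 'f trm).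
     (\<forall>i\<le>n. wf_trm ar 3 (d i)) \<and>
     (\<forall>i\<le>n. \<forall>b\<in>B. \<forall>b'\<in>B. \<forall>a\<in>A. eval op [b, a, b'] (d i) \<in> B) \<and>
     (\<forall>i<n. \<forall>x\<in>A. \<forall>y\<in>A. eval op [x, y, y] (d i) = eval op [x, x, y] (d (Suc i))) \<and>
     (\<forall>x\<in>A. \<forall>y\<in>A. \<forall>z\<in>A. eval op [x, y, z] (d 0) = x \<and> eval op [x, y, z] (d n) = z))"

end

theory Submission
  imports Defs
begin

fun subst :: "(nat \<Rightarrow> 'f trm) \<Rightarrow> 'f trm \<Rightarrow> 'f trm" where
  "subst s (Var i) = s i"
| "subst s (Op f ts) = Op f (map (subst s) ts)"

lemma eval_subst:
  "wf_trm ar n t \<Longrightarrow> eval op xs (subst s t) = eval op (map (\<lambda>j. eval op xs (s j)) [0..<n]) t"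
proof (induction t)
  case (Op f ts)
  then show ?case by (simp cong: map_cong)
qed simp

lemma wf_subst:
  "wf_trm ar n t \<Longrightarrow> (\<forall>j<n. wf_trm ar m (s j)) \<Longrightarrow> wf_trm ar m (subst s t)"
  by (induction t) auto

definition sig :: "nat \<Rightarrow> nat \<Rightarrow> 'f trm" where
  "sig i j = (if j+1 < i then Var 2 else if j+1 = i then Var 1 else Var 0)"

lemma eval_sig: "eval op [x,y,z] (sig i j) = (if j+1 < i then z else if j+1 = i then y else x)"
  by (simp add: sig_def)

theorem proposition2p2:
  fixes A B :: "'a set" and ar :: "'f \<Rightarrow> nat" and op :: "'f \<Rightarrow> 'a list \<Rightarrow> 'a"
  assumes "algebra A ar op"
    and "subuniverse B A ar op"
    and "absorbs B A ar op"
  shows "jonsson_absorbs B A ar op"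
proof -
  obtain n t where wf: "wf_trm ar n t" and idem: "idempotent_term A op n t"
    and abs: "\<And>as. length as = n \<Longrightarrow> set as \<subseteq> A \<Longrightarrow> card {i. i < n \<and> as ! i \<notin> B} \<le> 1
            \<Longrightarrow> eval op as t \<in> B"
    using assms(3) unfolding absorbs_def by blast
  have BA: "B \<subseteq> A" using assms(2) unfolding subuniverse_def by blast
  define d :: "nat \<Rightarrow> 'f trm" where
    "d k = (if k = 0 then Var 0 else if k = n+1 then Var 2 else subst (sig k) t)" for k
  define L where "L i x y z = map (\<lambda>j. if j+1 < i then z else if j+1 = i then y else (x::'a)) [0..<n]" for i x y z
  have evd: "eval op [x,y,z] (d i) = eval op (L i x y z) t" if "0 < i" "i \<le> n" for i x y z
    using that wf by (simp add: d_def eval_subst eval_sig L_def)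
  have rep: "eval op (replicate n x) t = x" if "x \<in> A" for x
    using idem that unfolding idempotent_term_def by blast
  show ?thesis unfolding jonsson_absorbs_def
  proof (intro exI[of _ "n+1"] exI[of _ d] conjI allI impI ballI)
    fix i assume "i \<le> n+1"
    show "wf_trm ar 3 (d i)"
      by (auto simp: d_def sig_def intro!: wf_subst[OF wf])
  next
    fix i b b' a assume i: "i \<le> n+1" and b: "b \<in> B" "b' \<in> B" and a: "a \<in> A"
    show "eval op [b, a, b'] (d i) \<in> B"
    proof (cases "i = 0 \<or> i = n+1")
      case True then show ?thesis using b by (auto simp: d_def)
    next
      case False
      hence i': "0 < i" "i \<le> n" using i by auto
      have "eval op (L i b a b') t \<in> B"
      proof (rule abs)
        show "length (L i b a b') = n" by (simp add: L_def)
        show "set (L i b a b') \<subseteq> A" using b a BA by (auto simp: L_def)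
        have "{j. j < n \<and> L i b a b' ! j \<notin> B} \<subseteq> {i - 1}"
          using b by (auto simp: L_def split: if_splits)
        from card_mono[OF _ this] show "card {j. j < n \<and> L i b a b' ! j \<notin> B} \<le> 1" by simp
      qed
      thus ?thesis using evd[OF i'] by simp
    qed
  next
    fix i x y assume i: "i < n+1" and x: "x \<in> A" and y: "y \<in> A"
    show "eval op [x, y, y] (d i) = eval op [x, x, y] (d (Suc i))"
    proof (cases "i = 0")
      case True
      show ?thesis
      proof (cases "n = 0")
        case True
        have "x = y" using rep[OF x] rep[OF y] True by simp
        thus ?thesis using \<open>i = 0\<close> True by (simp add: d_def)
      next
        case False
        have "L 1 x x y = replicate n x" by (auto simp: L_def intro: nth_equalityI)
        thus ?thesis using \<open>i = 0\<close> False evd[of 1 x x y] rep[OF x] by (simp add: d_def)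
      qed
    next
      case False
      show ?thesis
      proof (cases "i = n")
        case True
        have "L i x y y = replicate n y" using True by (auto simp: L_def intro: nth_equalityI)
        thus ?thesis using True False evd[of i x y y] rep[OF y] by (simp add: d_def)
      next
        case ni: False
        have "L i x y y = L (Suc i) x x y" by (auto simp: L_def)
        thus ?thesis using False ni i evd[of i x y y] evd[of "Suc i" x x y] by simp
      qed
    qed
  next
    fix x y z assume "x \<in> A" "y \<in> A" "z \<in> A"
    show "eval op [x, y, z] (d 0) = x" by (simp add: d_def)
    show "eval op [x, y, z] (d (n+1)) = z" by (simp add: d_def)
  qed
qed

end
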